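(* Let $E$ be a regular biordered set satisfying: (E1) there exists $0\in E$ with $0\,\omega\,e$ for every $e\in E$; (E2) there is a map $e\mapsto e'$ on $E$ such that for all $e,f\in E$: (i) $(e')'=e$; (ii) $f\,\omega^l\,e$ iff $e'\,\omega^r\,f'$; (iii) $f\,\omega^l\,e'$ iff $M(f,e)=\{0\}$. Let $e,f\in E$ with $1\le d_l(e,f)\le 3$. Then $\mathcal L(e)$ and $\mathcal L(f)$ are in perspective in the lattice $L(E)=E/\mathcal L$.
   Context: A regular biordered set is a partial algebra isomorphic to the set of idempotents $E(S)$ of a regular semigroup $S$ (regular: every $x$ has $y$ with $xyx=x$), where $ef$ (computed in $S$) is defined when $\{ef,fe\}\cap\{e,f\}\ne\emptyset$. In $E$: $\omega^l=\{(e,f): ef=e\}$, $\omega^r=\{(e,f): fe=e\}$, $\omega=\omega^l\cap\omega^r$; $M(e,f)=\{g\in E: g\,\omega^l\,e,\ g\,\omega^r\,f\}$. $\mathcal L=\omega^l\cap(\omega^l)^{-1}$, $\mathcal R=\omega^r\cap(\omega^r)^{-1}$; $E/\mathcal L$ is ordered by $\mathcal L(e)\le\mathcal L(f)$ iff $e\,\omega^l\,f$ (a lattice under (E1),(E2)). Two lattice elements are in perspective if they have a common complement. An $E$-sequence of length $m\ge1$ from $e$ to $f$ is $e=x_0,\dots,x_m=f$ with $x_{i-1}\,(\mathcal L\cup\mathcal R)\,x_i$ for each $i$; $d_l(e,f)$ is the least length of such a sequence with $x_0\,\mathcal L\,x_1$, and $d_l(e,f)=0$ if none exists. *)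

theory Defs
  imports Main
begin

(* A regular biordered set is (up to isomorphism) the set of idempotents E(S)
   of a regular semigroup S. *)

definition regular_semigroup :: "'a::semigroup_mult itself \<Rightarrow> bool" where
  "regular_semigroup _ \<longleftrightarrow> (\<forall>x::'a. \<exists>y. x * y * x = x)"

definition idems :: "'a::semigroup_mult set" where
  "idems = {e. e * e = e}"

definition omega_l :: "'a::semigroup_mult \<Rightarrow> 'a \<Rightarrow> bool" where
  "omega_l e f \<longleftrightarrow> e * f = e"

definition omega_r :: "'a::semigroup_mult \<Rightarrow> 'a \<Rightarrow> bool" where
  "omega_r e f \<longleftrightarrow> f * e = e"

definition omega :: "'a::semigroup_mult \<Rightarrow> 'a \<Rightarrow> bool" where
  "omega e f \<longleftrightarrow> omega_l e f \<and> omega_r e f"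

definition Lrel :: "'a::semigroup_mult \<Rightarrow> 'a \<Rightarrow> bool" where
  "Lrel e f \<longleftrightarrow> omega_l e f \<and> omega_l f e"

definition Rrel :: "'a::semigroup_mult \<Rightarrow> 'a \<Rightarrow> bool" where
  "Rrel e f \<longleftrightarrow> omega_r e f \<and> omega_r f e"

definition Mset :: "'a::semigroup_mult \<Rightarrow> 'a \<Rightarrow> 'a set" where
  "Mset e f = {g \<in> idems. omega_l g e \<and> omega_r g f}"

definition Eseq_l :: "'a::semigroup_mult \<Rightarrow> 'a \<Rightarrow> nat \<Rightarrow> bool" where
  "Eseq_l e f m \<longleftrightarrow> m \<ge> 1 \<and> (\<exists>x::nat \<Rightarrow> 'a. x 0 = e \<and> x m = f \<and>
      (\<forall>i\<le>m. x i \<in> idems) \<and>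
      (\<forall>i\<in>{1..m}. Lrel (x (i - 1)) (x i) \<or> Rrel (x (i - 1)) (x i)) \<and>
      Lrel (x 0) (x 1))"

definition d_l :: "'a::semigroup_mult \<Rightarrow> 'a \<Rightarrow> nat" where
  "d_l e f = (if \<exists>m. Eseq_l e f m then (LEAST m. Eseq_l e f m) else 0)"

definition Lclass :: "'a::semigroup_mult \<Rightarrow> 'a set" where
  "Lclass e = {f \<in> idems. Lrel e f}"

definition Lclasses :: "'a::semigroup_mult set set" where
  "Lclasses = Lclass ` idems"

definition Lle :: "'a::semigroup_mult set \<Rightarrow> 'a set \<Rightarrow> bool" where
  "Lle A B \<longleftrightarrow> (\<exists>a\<in>A. \<exists>b\<in>B. omega_l a b)"

definition is_complement :: "'a::semigroup_mult set \<Rightarrow> 'a set \<Rightarrow> bool" where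
  "is_complement A C \<longleftrightarrow>
     (\<exists>bot\<in>Lclasses. (\<forall>X\<in>Lclasses. Lle bot X) \<and>
        (\<forall>X\<in>Lclasses. Lle X A \<and> Lle X C \<longrightarrow> X = bot)) \<and>
     (\<exists>top\<in>Lclasses. (\<forall>X\<in>Lclasses. Lle X top) \<and>
        (\<forall>X\<in>Lclasses. Lle A X \<and> Lle C X \<longrightarrow> X = top))"

definition in_perspective :: "'a::semigroup_mult set \<Rightarrow> 'a set \<Rightarrow> bool" where
  "in_perspective A B \<longleftrightarrow> (\<exists>C\<in>Lclasses. is_complement A C \<and> is_complement B C)"

end

theory Submission
  imports Defs
begin

lemma Lrel_refl: "e \<in> idems \<Longrightarrow> Lrel e e"
  by (simp add: Lrel_def omega_l_def idems_def)

lemma Rrel_refl: "e \<in> idems \<Longrightarrow> Rrel e e"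
  by (simp add: Rrel_def omega_r_def idems_def)

lemma Lrel_sym: "Lrel e f \<Longrightarrow> Lrel f e"
  by (simp add: Lrel_def)

lemma Lrel_trans: "Lrel e f \<Longrightarrow> Lrel f g \<Longrightarrow> Lrel e (g::'a::semigroup_mult)"
  unfolding Lrel_def omega_l_def by (metis mult.assoc)

lemma Rrel_trans: "Rrel e f \<Longrightarrow> Rrel f g \<Longrightarrow> Rrel e (g::'a::semigroup_mult)"
  unfolding Rrel_def omega_r_def by (metis mult.assoc)

lemma Lclass_eq: "Lrel e f \<Longrightarrow> Lclass e = Lclass (f::'a::semigroup_mult)"
  unfolding Lclass_def using Lrel_trans Lrel_sym by blast

lemma Lclass_eqD: "h \<in> idems \<Longrightarrow> Lclass h = Lclass g \<Longrightarrow> Lrel g (h::'a::semigroup_mult)"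
  unfolding Lclass_def using Lrel_refl by blast

lemma Lle_Lclass:
  assumes "e \<in> idems" "f \<in> idems"
  shows "Lle (Lclass e) (Lclass f) \<longleftrightarrow> omega_l e (f::'a::semigroup_mult)"
proof
  assume "Lle (Lclass e) (Lclass f)"
  then obtain a b where "Lrel e a" "Lrel f b" "omega_l a b"
    unfolding Lle_def Lclass_def by blast
  then show "omega_l e f" unfolding Lrel_def omega_l_def by (metis mult.assoc)
next
  assume "omega_l e f"
  then show "Lle (Lclass e) (Lclass f)"
    unfolding Lle_def Lclass_def using assms Lrel_refl by blast
qed

lemma Lclasses_E: "X \<in> (Lclasses :: 'a::semigroup_mult set set) \<Longrightarrow> (\<And>h. h \<in> idems \<Longrightarrow> X = Lclass h \<Longrightarrow> P) \<Longrightarrow> P"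
  unfolding Lclasses_def by blast

lemma complement:
  fixes z :: "'a::semigroup_mult" and c :: "'a \<Rightarrow> 'a"
  assumes E1: "z \<in> idems" "\<forall>g\<in>idems. omega z g"
    and E2map: "\<forall>g\<in>idems. c g \<in> idems"
    and E2i: "\<forall>g\<in>idems. c (c g) = g"
    and E2ii: "\<forall>g\<in>idems. \<forall>h\<in>idems. omega_l h g \<longleftrightarrow> omega_r (c g) (c h)"
    and E2iii: "\<forall>g\<in>idems. \<forall>h\<in>idems. omega_l h (c g) \<longleftrightarrow> Mset h g = {z}"
    and x: "x \<in> idems"
  shows "is_complement (Lclass x) (Lclass (c x))"
proof -
  have zl: "\<And>g. g \<in> idems \<Longrightarrow> z * g = z" and zr: "\<And>g. g \<in> idems \<Longrightarrow> g * z = z"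
    using E1 unfolding omega_def omega_l_def omega_r_def by auto
  have cx: "c x \<in> idems" using E2map x by auto
  have cz: "c z \<in> idems" using E2map E1 by auto
  have top: "omega_l h (c z)" if h: "h \<in> idems" for h
  proof -
    have "Mset h z = {z}"
    proof
      show "Mset h z \<subseteq> {z}" unfolding Mset_def omega_r_def using zl by auto
      show "{z} \<subseteq> Mset h z" unfolding Mset_def omega_r_def omega_l_def
        using E1 zl h by (auto simp: idems_def)
    qed
    then show ?thesis using E2iii E1 h by auto
  qed
  have part1: "\<exists>bot\<in>Lclasses. (\<forall>X\<in>Lclasses. Lle bot X) \<and>
        (\<forall>X\<in>Lclasses. Lle X (Lclass x) \<and> Lle X (Lclass (c x)) \<longrightarrow> X = bot)"
  proof (intro bexI conjI ballI impI)
    show "Lclass z \<in> Lclasses" using E1 unfolding Lclasses_def by auto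
    fix X :: "'a set" assume "X \<in> Lclasses"
    obtain h where h: "h \<in> idems" "X = Lclass h" using \<open>X \<in> Lclasses\<close> by (rule Lclasses_E)
    show "Lle (Lclass z) X" using h E1 Lle_Lclass[of z h] zl by (simp add: omega_l_def)
  next
    fix X :: "'a set" assume "X \<in> Lclasses" and le: "Lle X (Lclass x) \<and> Lle X (Lclass (c x))"
    obtain h where h: "h \<in> idems" "X = Lclass h" using \<open>X \<in> Lclasses\<close> by (rule Lclasses_E)
    have hx: "h * x = h" using le h x Lle_Lclass[of h x] by (simp add: omega_l_def)
    have hcx: "omega_l h (c x)" using le h cx Lle_Lclass[of h "c x"] by simp
    then have M: "Mset h x = {z}" using E2iii h x by auto
    have "x * h \<in> Mset h x" unfolding Mset_def omega_l_def omega_r_def idems_def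
      using hx h x by (simp add: idems_def mult.assoc[symmetric]) (metis mult.assoc)
    then have "x * h = z" using M by auto
    then have "h * z = h * (x * h)" by simp
    also have "\<dots> = (h * x) * h" by (simp add: mult.assoc)
    also have "\<dots> = h" using hx h by (simp add: idems_def)
    finally have "h * z = h" .
    then have "Lrel h z" using zl h unfolding Lrel_def omega_l_def by auto
    then show "X = Lclass z" using h Lclass_eq by auto
  qed
  have part2: "\<exists>top\<in>Lclasses. (\<forall>X\<in>Lclasses. Lle X top) \<and>
        (\<forall>X\<in>Lclasses. Lle (Lclass x) X \<and> Lle (Lclass (c x)) X \<longrightarrow> X = top)"
  proof (intro bexI conjI ballI impI)
    show "Lclass (c z) \<in> Lclasses" using cz unfolding Lclasses_def by auto
    fix X :: "'a set" assume "X \<in> Lclasses"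
    obtain h where h: "h \<in> idems" "X = Lclass h" using \<open>X \<in> Lclasses\<close> by (rule Lclasses_E)
    show "Lle X (Lclass (c z))" using h cz top Lle_Lclass by auto
  next
    fix X :: "'a set" assume "X \<in> Lclasses" and le: "Lle (Lclass x) X \<and> Lle (Lclass (c x)) X"
    obtain h where h: "h \<in> idems" "X = Lclass h" using \<open>X \<in> Lclasses\<close> by (rule Lclasses_E)
    have ch: "c h \<in> idems" using E2map h by auto
    have "omega_l x h" using le h x Lle_Lclass by auto
    then have k1: "omega_r (c h) (c x)" using E2ii h x by auto
    have "omega_l (c x) h" using le h cx Lle_Lclass by auto
    then have "omega_r (c h) (c (c x))" using E2ii h cx by auto
    then have k2: "omega_r (c h) x" using E2i x by auto
    define k where "k = c h"
    have kk: "k * k = k" using ch k_def by (simp add: idems_def)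
    have xk: "x * k = k" using k2 k_def by (simp add: omega_r_def)
    have cxk: "c x * k = k" using k1 k_def by (simp add: omega_r_def)
    define k' where "k' = k * x"
    have "k' * k' = k * (x * k) * x" unfolding k'_def by (simp add: mult.assoc)
    then have k'i: "k' \<in> idems" using xk kk unfolding idems_def k'_def by simp
    have "omega_r k' (c x)" unfolding omega_r_def k'_def
      using cxk by (simp add: mult.assoc[symmetric])
    then have "omega_r (c (c k')) (c x)" using E2i k'i by auto
    then have "omega_l x (c k')" using E2ii k'i E2map x by auto
    then have M: "Mset x k' = {z}" using E2iii k'i x by auto
    have "k' \<in> Mset x k'" unfolding Mset_def omega_l_def omega_r_def
      using k'i x by (auto simp: idems_def k'_def mult.assoc)
    then have "k' = z" using M by auto
    have "k' * k = k * (x * k)" unfolding k'_def by (simp add: mult.assoc)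
    then have "k = k' * k" using xk kk by simp
    then have "k = z" using \<open>k' = z\<close> zl ch k_def by auto
    then have "c h = z" using k_def by simp
    then have "h = c z" using E2i h by force
    then show "X = Lclass (c z)" using h by simp
  qed
  show ?thesis unfolding is_complement_def using part1 part2 by blast
qed

theorem proposition5p6:
  fixes z :: "'a::semigroup_mult" and c :: "'a \<Rightarrow> 'a" and e f :: 'a
  assumes reg: "regular_semigroup TYPE('a)"
    and E1: "z \<in> idems" "\<forall>g\<in>idems. omega z g"
    and E2map: "\<forall>g\<in>idems. c g \<in> idems"
    and E2i: "\<forall>g\<in>idems. c (c g) = g"
    and E2ii: "\<forall>g\<in>idems. \<forall>h\<in>idems. omega_l h g \<longleftrightarrow> omega_r (c g) (c h)"
    and E2iii: "\<forall>g\<in>idems. \<forall>h\<in>idems. omega_l h (c g) \<longleftrightarrow> Mset h g = {z}"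
    and ef: "e \<in> idems" "f \<in> idems"
    and d: "1 \<le> d_l e f" "d_l e f \<le> 3"
  shows "in_perspective (Lclass e) (Lclass f)"
proof -
  have ex: "\<exists>m. Eseq_l e f m" using d(1) unfolding d_l_def by (auto split: if_splits)
  then have "Eseq_l e f (d_l e f)" unfolding d_l_def by (simp add: LeastI_ex)
  then obtain x where x0: "x 0 = e" and xm: "x (d_l e f) = f"
    and xi: "\<forall>i\<le>d_l e f. x i \<in> idems"
    and st: "\<forall>i\<in>{1..d_l e f}. Lrel (x (i - 1)) (x i) \<or> Rrel (x (i - 1)) (x i)"
    and l1: "Lrel (x 0) (x 1)"
    unfolding Eseq_l_def by blast
  have "\<exists>y w. y \<in> idems \<and> w \<in> idems \<and> Lrel e y \<and> Rrel y w \<and> Lrel w f"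
  proof -
    have cases: "d_l e f = 1 \<or> d_l e f = 2 \<or> d_l e f = 3" using d by auto
    have i1: "x 1 \<in> idems" using xi d by auto
    show ?thesis
    proof (cases "d_l e f = 1")
      case True
      then have "Lrel e f" using l1 x0 xm by simp
      then show ?thesis using ef Rrel_refl Lrel_refl by blast
    next
      case n1: False
      have s2: "Lrel (x 1) (x 2) \<or> Rrel (x 1) (x 2)"
      proof -
        have "(2::nat) \<in> {1..d_l e f}" using n1 cases by auto
        then show ?thesis using st by fastforce
      qed
      have i2: "x 2 \<in> idems" using xi n1 cases by auto
      show ?thesis
      proof (cases "d_l e f = 2")
        case True
        then have f2: "x 2 = f" using xm by simp
        show ?thesis using s2
        proof
          assume "Lrel (x 1) (x 2)"
          then have "Lrel e f" using l1 x0 f2 Lrel_trans by metis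
          then show ?thesis using ef Rrel_refl Lrel_refl by blast
        next
          assume "Rrel (x 1) (x 2)"
          then have "Lrel e (x 1)" "Rrel (x 1) f" using l1 x0 f2 by auto
          then show ?thesis using ef i1 Lrel_refl by blast
        qed
      next
        case False
        then have d3: "d_l e f = 3" using cases n1 by auto
        then have f3: "x 3 = f" using xm by simp
        have s3: "Lrel (x 2) (x 3) \<or> Rrel (x 2) (x 3)"
        proof -
          have "(3::nat) \<in> {1..d_l e f}" using d3 by auto
          then have "Lrel (x (3-1)) (x 3) \<or> Rrel (x (3-1)) (x 3)" using st by blast
          then show ?thesis by simp
        qed
        show ?thesis using s2 s3
        proof (elim disjE)
          assume a: "Lrel (x 1) (x 2)" "Lrel (x 2) (x 3)"
          then have "Lrel e f" using l1 x0 f3 Lrel_trans by metis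
          then show ?thesis using ef Rrel_refl Lrel_refl by blast
        next
          assume a: "Lrel (x 1) (x 2)" "Rrel (x 2) (x 3)"
          then have "Lrel e (x 2)" "Rrel (x 2) f" using l1 x0 f3 Lrel_trans by metis+
          then show ?thesis using ef i2 Lrel_refl by blast
        next
          assume a: "Rrel (x 1) (x 2)" "Lrel (x 2) (x 3)"
          then have "Lrel e (x 1)" "Rrel (x 1) (x 2)" "Lrel (x 2) f" using l1 x0 f3 by auto
          then show ?thesis using i1 i2 by blast
        next
          assume a: "Rrel (x 1) (x 2)" "Rrel (x 2) (x 3)"
          then have "Lrel e (x 1)" "Rrel (x 1) f" using l1 x0 f3 Rrel_trans by metis+
          then show ?thesis using ef i1 Lrel_refl by blast
        qed
      qed
    qed
  qed
  then obtain y w where yw: "y \<in> idems" "w \<in> idems" "Lrel e y" "Rrel y w" "Lrel w f" by blast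
  have cy: "c y \<in> idems" and cw: "c w \<in> idems" using E2map yw by auto
  have "omega_r (c (c y)) (c (c w))" using yw(4) E2i yw by (simp add: Rrel_def)
  then have a: "omega_l (c w) (c y)" using E2ii cy cw by auto
  have "omega_r (c (c w)) (c (c y))" using yw(4) E2i yw by (simp add: Rrel_def)
  then have b: "omega_l (c y) (c w)" using E2ii cy cw by auto
  have Ceq: "Lclass (c w) = Lclass (c y)" using a b Lclass_eq unfolding Lrel_def by blast
  have c1: "is_complement (Lclass y) (Lclass (c y))"
    using complement[OF E1 E2map E2i E2ii E2iii yw(1)] .
  have c2: "is_complement (Lclass w) (Lclass (c w))"
    using complement[OF E1 E2map E2i E2ii E2iii yw(2)] .
  have "Lclass e = Lclass y" "Lclass f = Lclass w"
    using yw Lclass_eq Lrel_sym by blast+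
  then show ?thesis unfolding in_perspective_def Lclasses_def
    using c1 c2 Ceq cy by auto
qed

end
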